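(* Let $t<n/2$ and let $\nu\vdash 2n$ be a non-fat even partition. Then the trivial representation of $K=S_{2(n-t)}\times H_t$ does not occur in the restriction $S^\nu\downarrow^{S_{2n}}_K$.
   Context: $S^\nu$ is the irreducible representation of $S_{2n}$ indexed by $\nu\vdash 2n$. $K=S_{2(n-t)}\times H_t\le S_{2n}$, where $S_{2(n-t)}$ is the symmetric group on a fixed set of $2(n-t)$ points and $H_t\cong S_2\wr S_t$ is the stabilizer of a fixed perfect matching of the complementary $2t$ points. A partition $\nu\vdash 2n$ is even if $\nu=2\lambda=(2\lambda_1,2\lambda_2,\dots)$ for some $\lambda\vdash n$; it is fat if $\nu\ge 2(n-t,1^t)=(2(n-t),2,\dots,2)$ in reverse-lexicographic order ($\mu\le\lambda$ iff $\mu=\lambda$ or $\mu_j<\lambda_j$ at the first differing index $j$), and non-fat otherwise. *)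

theory Defs
  imports Complex_Main "HOL-Combinatorics.Permutations"
begin

definition is_partition :: "nat \<Rightarrow> nat list \<Rightarrow> bool" where
  "is_partition N p \<longleftrightarrow> sorted_wrt (\<ge>) p \<and> (\<forall>x\<in>set p. 0 < x) \<and> sum_list p = N"

definition part :: "nat list \<Rightarrow> nat \<Rightarrow> nat" where
  "part p j = (if j < length p then p ! j else 0)"

definition revlex_le :: "nat list \<Rightarrow> nat list \<Rightarrow> bool" where
  "revlex_le mu lam \<longleftrightarrow> mu = lam \<or>
     (\<exists>j. (\<forall>i<j. part mu i = part lam i) \<and> part mu j < part lam j)"

definition even_partition :: "nat \<Rightarrow> nat list \<Rightarrow> bool" where
  "even_partition n nu \<longleftrightarrow> (\<exists>lam. is_partition n lam \<and> nu = map (\<lambda>x. 2 * x) lam)"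

definition fat :: "nat \<Rightarrow> nat \<Rightarrow> nat list \<Rightarrow> bool" where
  "fat n t nu \<longleftrightarrow> revlex_le (2 * (n - t) # replicate t 2) nu"

definition cells :: "nat list \<Rightarrow> (nat \<times> nat) set" where
  "cells nu = {(i, j). i < length nu \<and> j < nu ! i}"

definition tableau :: "nat list \<Rightarrow> (nat \<times> nat \<Rightarrow> nat) \<Rightarrow> bool" where
  "tableau nu T \<longleftrightarrow> bij_betw T (cells nu) {0..<sum_list nu}"

text \<open>Tabloid of a tableau, represented as the row assignment of each point (0 off the diagram).\<close>
definition tabloid :: "nat list \<Rightarrow> (nat \<times> nat \<Rightarrow> nat) \<Rightarrow> (nat \<Rightarrow> nat)" where
  "tabloid nu T = (\<lambda>x. if x \<in> T ` cells nu then fst (the_inv_into (cells nu) T x) else 0)"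

definition colstab :: "nat list \<Rightarrow> (nat \<times> nat \<Rightarrow> nat) \<Rightarrow> (nat \<Rightarrow> nat) set" where
  "colstab nu T = {\<sigma>. \<sigma> permutes {0..<sum_list nu} \<and>
      (\<forall>c\<in>cells nu. snd (the_inv_into (cells nu) T (\<sigma> (T c))) = snd c)}"

text \<open>Vectors of the permutation module M^nu over the complex numbers are functions from
  tabloids to coefficients.  The polytabloid e_T = sum over sigma in C_T of sign(sigma) {sigma T}.\<close>
definition polytabloid :: "nat list \<Rightarrow> (nat \<times> nat \<Rightarrow> nat) \<Rightarrow> ((nat \<Rightarrow> nat) \<Rightarrow> complex)" where
  "polytabloid nu T = (\<lambda>g. \<Sum>\<sigma>\<in>colstab nu T.
      if tabloid nu (\<sigma> \<circ> T) = g then of_int (sign \<sigma>) else 0)"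

definition specht :: "nat list \<Rightarrow> ((nat \<Rightarrow> nat) \<Rightarrow> complex) set" where
  "specht nu = {v. \<exists>S c. finite S \<and> (\<forall>T\<in>S. tableau nu T) \<and>
      v = (\<lambda>g. \<Sum>T\<in>S. c T * polytabloid nu T g)}"

text \<open>Permutation action on M^nu: sigma {T} = {sigma \<circ> T}, i.e. (sigma v)(h) = v(h \<circ> sigma).\<close>
definition perm_act :: "(nat \<Rightarrow> nat) \<Rightarrow> ((nat \<Rightarrow> nat) \<Rightarrow> complex) \<Rightarrow> ((nat \<Rightarrow> nat) \<Rightarrow> complex)" where
  "perm_act \<sigma> v = (\<lambda>h. v (h \<circ> \<sigma>))"

text \<open>Partner of a point in the fixed perfect matching {2(n-t)+2k, 2(n-t)+2k+1} of {2(n-t)..<2n}.\<close>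
definition partner :: "nat \<Rightarrow> nat" where
  "partner x = (if even x then x + 1 else x - 1)"

text \<open>K = S_{2(n-t)} x H_t inside S_{2n} (acting on {0..<2n}).\<close>
definition young_K :: "nat \<Rightarrow> nat \<Rightarrow> (nat \<Rightarrow> nat) set" where
  "young_K n t = {\<sigma>. \<sigma> permutes {0..<2*n} \<and> \<sigma> ` {0..<2*(n-t)} = {0..<2*(n-t)} \<and>
      (\<forall>x\<in>{2*(n-t)..<2*n}. \<sigma> (partner x) = partner (\<sigma> x))}"

text \<open>The trivial representation of a subgroup K occurs in the restriction of S^nu to K iff
  S^nu has a nonzero K-fixed vector (Hom_K(1, Res V) = V^K).\<close>
definition trivial_occurs :: "nat list \<Rightarrow> (nat \<Rightarrow> nat) set \<Rightarrow> bool" where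
  "trivial_occurs nu K \<longleftrightarrow> (\<exists>v\<in>specht nu. v \<noteq> (\<lambda>_. 0) \<and> (\<forall>\<sigma>\<in>K. perm_act \<sigma> v = v))"

end

theory Submission
  imports Defs
begin

lemma tab_inv:
  assumes "tableau nu T" "x \<in> {0..<sum_list nu}"
  shows "the_inv_into (cells nu) T x \<in> cells nu \<and> T (the_inv_into (cells nu) T x) = x"
  using assms unfolding tableau_def
  by (metis bij_betw_def f_the_inv_into_f_bij_betw the_inv_into_into order_refl)

lemma tab_inv2:
  assumes "tableau nu T" "c \<in> cells nu"
  shows "the_inv_into (cells nu) T (T c) = c"
  using assms unfolding tableau_def by (meson bij_betw_def the_inv_into_f_f)

lemma tab_comp:
  assumes "tableau nu U" "\<rho> permutes {0..<sum_list nu}"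
  shows "tableau nu (\<rho> \<circ> U)"
  using assms unfolding tableau_def by (meson bij_betw_trans permutes_imp_bij)

lemma tabloid_comp:
  assumes U: "tableau nu U" and r: "\<rho> permutes {0..<sum_list nu}"
  shows "tabloid nu (\<rho> \<circ> U) (\<rho> y) = tabloid nu U y"
proof -
  have imU: "U ` cells nu = {0..<sum_list nu}" using U unfolding tableau_def bij_betw_def by simp
  have imRU: "(\<rho> \<circ> U) ` cells nu = {0..<sum_list nu}"
    using tab_comp[OF U r] unfolding tableau_def bij_betw_def by simp
  show ?thesis
  proof (cases "y \<in> {0..<sum_list nu}")
    case True
    have ry: "\<rho> y \<in> {0..<sum_list nu}" using True r by (meson permutes_in_image)
    define c where "c = the_inv_into (cells nu) U y"
    have c: "c \<in> cells nu" "U c = y" using tab_inv[OF U True] c_def by auto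
    have "the_inv_into (cells nu) (\<rho> \<circ> U) (\<rho> y) = c"
      using tab_inv2[OF tab_comp[OF U r] c(1)] c(2) by simp
    then show ?thesis unfolding tabloid_def using imU imRU True ry c_def by simp
  next
    case False
    have "\<rho> y = y" using False r by (meson permutes_not_in)
    then show ?thesis unfolding tabloid_def using imU imRU False by simp
  qed
qed

lemma tabloid_comp_eq:
  assumes U: "tableau nu U" and r: "\<rho> permutes {0..<sum_list nu}"
  shows "(tabloid nu (\<rho> \<circ> U) = h \<circ> \<pi>) \<longleftrightarrow> (tabloid nu U = h \<circ> \<pi> \<circ> \<rho>)"
proof
  assume a: "tabloid nu (\<rho> \<circ> U) = h \<circ> \<pi>"
  show "tabloid nu U = h \<circ> \<pi> \<circ> \<rho>"
  proof
    fix y show "tabloid nu U y = (h \<circ> \<pi> \<circ> \<rho>) y"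
      using tabloid_comp[OF U r, of y] a by (metis comp_apply)
  qed
next
  assume a: "tabloid nu U = h \<circ> \<pi> \<circ> \<rho>"
  show "tabloid nu (\<rho> \<circ> U) = h \<circ> \<pi>"
  proof
    fix x
    obtain y where y: "x = \<rho> y" using r by (metis permutes_surj surj_def)
    show "tabloid nu (\<rho> \<circ> U) x = (h \<circ> \<pi>) x"
      using tabloid_comp[OF U r, of y] a y by simp
  qed
qed

lemma colstab_comp:
  assumes T: "tableau nu T" and t: "\<tau> \<in> colstab nu T" and s: "\<sigma> \<in> colstab nu T"
  shows "\<tau> \<circ> \<sigma> \<in> colstab nu T"
proof -
  have tp: "\<tau> permutes {0..<sum_list nu}" and sp: "\<sigma> permutes {0..<sum_list nu}"
    using t s unfolding colstab_def by auto
  have imT: "T ` cells nu = {0..<sum_list nu}" using T unfolding tableau_def bij_betw_def by simp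
  have "snd (the_inv_into (cells nu) T ((\<tau> \<circ> \<sigma>) (T c))) = snd c" if c: "c \<in> cells nu" for c
  proof -
    have "\<sigma> (T c) \<in> {0..<sum_list nu}" using c imT sp by (metis image_eqI permutes_in_image)
    then have c': "the_inv_into (cells nu) T (\<sigma> (T c)) \<in> cells nu"
      "T (the_inv_into (cells nu) T (\<sigma> (T c))) = \<sigma> (T c)" using tab_inv[OF T] by auto
    have "snd (the_inv_into (cells nu) T (\<tau> (T (the_inv_into (cells nu) T (\<sigma> (T c))))))
       = snd (the_inv_into (cells nu) T (\<sigma> (T c)))" using t c'(1) unfolding colstab_def by blast
    also have "\<dots> = snd c" using s c unfolding colstab_def by blast
    finally show ?thesis using c'(2) by simp
  qed
  then show ?thesis unfolding colstab_def using permutes_compose[OF sp tp] by blast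
qed

lemma swap_colstab:
  assumes T: "tableau nu T" and a: "a \<in> {0..<sum_list nu}" and b: "b \<in> {0..<sum_list nu}"
    and col: "snd (the_inv_into (cells nu) T a) = snd (the_inv_into (cells nu) T b)"
  shows "transpose a b \<in> colstab nu T"
proof -
  have imT: "T ` cells nu = {0..<sum_list nu}" using T unfolding tableau_def bij_betw_def by simp
  have "snd (the_inv_into (cells nu) T (transpose a b (T c))) = snd c" if c: "c \<in> cells nu" for c
  proof -
    have e: "the_inv_into (cells nu) T (T c) = c" using tab_inv2[OF T c] .
    show ?thesis
    proof (cases "T c = a \<or> T c = b")
      case True
      then show ?thesis
      proof
        assume h: "T c = a"
        then have "transpose a b (T c) = b" by simp
        then show ?thesis using e col h by simp
      next
        assume h: "T c = b"
        then have "transpose a b (T c) = a" by simp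
        then show ?thesis using e col h by simp
      qed
    next
      case False
      then have "transpose a b (T c) = T c" by (simp add: transpose_def)
      then show ?thesis using e by simp
    qed
  qed
  then show ?thesis unfolding colstab_def using permutes_swap_id[OF a b] by blast
qed

lemma finite_colstab: "finite (colstab nu T)"
proof -
  have "colstab nu T \<subseteq> {\<sigma>. \<sigma> permutes {0..<sum_list nu}}" unfolding colstab_def by auto
  then show ?thesis using finite_permutations[of "{0..<sum_list nu}"] finite_subset by blast
qed

lemma vanish:
  assumes T: "tableau nu T" and A: "A \<subseteq> {0..<sum_list nu}" and a: "a \<in> A" and b: "b \<in> A"
    and ab: "a \<noteq> b"
    and col: "snd (the_inv_into (cells nu) T a) = snd (the_inv_into (cells nu) T b)"
  shows "(\<Sum>\<pi>\<in>{\<pi>. \<pi> permutes A}. polytabloid nu T (h \<circ> \<pi>)) = 0"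
proof -
  define P where "P = {\<pi>. \<pi> permutes A}"
  define C where "C = colstab nu T"
  define \<tau> where "\<tau> = transpose a b"
  define G where "G = (\<lambda>\<sigma>. \<Sum>\<pi>\<in>P. if tabloid nu (\<sigma> \<circ> T) = h \<circ> \<pi> then (1::complex) else 0)"
  have finP: "finite P" unfolding P_def
    using finite_permutations[of A] finite_subset[OF A] by simp
  have finC: "finite C" unfolding C_def by (rule finite_colstab)
  have tC: "\<tau> \<in> C" unfolding \<tau>_def C_def using swap_colstab[OF T _ _ col] a b A by (meson subsetD)
  have tA: "\<tau> permutes A" unfolding \<tau>_def using permutes_swap_id[OF a b] .
  have tN: "\<tau> permutes {0..<sum_list nu}" using tC unfolding C_def colstab_def by auto
  have tt: "\<tau> \<circ> \<tau> = id" unfolding \<tau>_def by (simp add: fun_eq_iff)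
  have sgt: "sign \<tau> = -1" unfolding \<tau>_def using ab by (simp add: sign_swap_id)
  have F: "(\<Sum>\<pi>\<in>P. polytabloid nu T (h \<circ> \<pi>)) = (\<Sum>\<sigma>\<in>C. of_int (sign \<sigma>) * G \<sigma>)"
  proof -
    have "(\<Sum>\<pi>\<in>P. polytabloid nu T (h \<circ> \<pi>)) = (\<Sum>\<pi>\<in>P. \<Sum>\<sigma>\<in>C. of_int (sign \<sigma>) *
        (if tabloid nu (\<sigma> \<circ> T) = h \<circ> \<pi> then (1::complex) else 0))"
      unfolding polytabloid_def C_def by (intro sum.cong refl) simp
    also have "\<dots> = (\<Sum>\<sigma>\<in>C. \<Sum>\<pi>\<in>P. of_int (sign \<sigma>) *
        (if tabloid nu (\<sigma> \<circ> T) = h \<circ> \<pi> then (1::complex) else 0))"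
      by (rule sum.swap)
    also have "\<dots> = (\<Sum>\<sigma>\<in>C. of_int (sign \<sigma>) * G \<sigma>)"
      unfolding G_def by (simp add: sum_distrib_left)
    finally show ?thesis .
  qed
  have G: "G (\<tau> \<circ> \<sigma>) = G \<sigma>" if s: "\<sigma> \<in> C" for \<sigma>
  proof -
    have sN: "\<sigma> permutes {0..<sum_list nu}" using s unfolding C_def colstab_def by auto
    have U: "tableau nu (\<sigma> \<circ> T)" using tab_comp[OF T sN] .
    have "G (\<tau> \<circ> \<sigma>) = (\<Sum>\<pi>\<in>P. if tabloid nu (\<sigma> \<circ> T) = h \<circ> (\<pi> \<circ> \<tau>) then (1::complex) else 0)"
      unfolding G_def using tabloid_comp_eq[OF U tN, of h] by (simp add: o_assoc)
    also have "\<dots> = G \<sigma>" unfolding G_def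
      by (rule sum.reindex_bij_witness[where i = "\<lambda>\<pi>. \<pi> \<circ> \<tau>" and j = "\<lambda>\<pi>. \<pi> \<circ> \<tau>"])
        (use tt tA in \<open>auto simp: o_assoc[symmetric] P_def permutes_compose\<close>)
    finally show ?thesis .
  qed
  have "(\<Sum>\<sigma>\<in>C. of_int (sign \<sigma>) * G \<sigma>) = (\<Sum>\<sigma>\<in>C. of_int (sign (\<tau> \<circ> \<sigma>)) * G (\<tau> \<circ> \<sigma>))"
  proof -
    have tta: "\<tau> \<circ> (\<tau> \<circ> x) = x" for x :: "nat \<Rightarrow> nat" using tt by (simp add: o_assoc)
    show ?thesis
      by (rule sum.reindex_bij_witness[where i = "\<lambda>\<sigma>. \<tau> \<circ> \<sigma>" and j = "\<lambda>\<sigma>. \<tau> \<circ> \<sigma>"])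
        (use tta tC T in \<open>auto simp: C_def colstab_comp\<close>)
  qed
  also have "\<dots> = (\<Sum>\<sigma>\<in>C. - (of_int (sign \<sigma>) * G \<sigma>))"
  proof (rule sum.cong[OF refl])
    fix \<sigma> assume s: "\<sigma> \<in> C"
    have sN: "\<sigma> permutes {0..<sum_list nu}" using s unfolding C_def colstab_def by auto
    have "sign (\<tau> \<circ> \<sigma>) = sign \<tau> * sign \<sigma>"
      by (rule sign_compose) (meson tN sN finite_atLeastLessThan permutation_permutes)+
    then show "of_int (sign (\<tau> \<circ> \<sigma>)) * G (\<tau> \<circ> \<sigma>) = - (of_int (sign \<sigma>) * G \<sigma>)"
      using G[OF s] sgt by simp
  qed
  also have "\<dots> = - (\<Sum>\<sigma>\<in>C. of_int (sign \<sigma>) * G \<sigma>)" by (simp add: sum_negf)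
  finally have "(\<Sum>\<sigma>\<in>C. of_int (sign \<sigma>) * G \<sigma>) = 0" by simp
  then show ?thesis using F unfolding P_def by simp
qed

lemma col_bound:
  assumes p: "is_partition N nu" and c: "c \<in> cells nu"
  shows "snd c < nu ! 0"
proof -
  obtain i j where ij: "c = (i, j)" "i < length nu" "j < nu ! i" using c unfolding cells_def by auto
  have "nu ! i \<le> nu ! 0"
  proof (cases "i = 0")
    case False
    have "sorted_wrt (\<ge>) nu" using p unfolding is_partition_def by simp
    then show ?thesis using ij(2) False sorted_wrt_nth_less[of "(\<ge>)" nu 0 i] by simp
  qed simp
  then show ?thesis using ij by simp
qed

lemma pigeon:
  assumes p: "is_partition N nu" and T: "tableau nu T" and A: "A \<subseteq> {0..<sum_list nu}"
    and card: "nu ! 0 < card A"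
  shows "\<exists>a\<in>A. \<exists>b\<in>A. a \<noteq> b \<and>
     snd (the_inv_into (cells nu) T a) = snd (the_inv_into (cells nu) T b)"
proof (rule ccontr)
  assume "\<not> ?thesis"
  then have inj: "inj_on (\<lambda>x. snd (the_inv_into (cells nu) T x)) A" unfolding inj_on_def by blast
  have "(\<lambda>x. snd (the_inv_into (cells nu) T x)) ` A \<subseteq> {0..<nu ! 0}"
  proof
    fix y assume "y \<in> (\<lambda>x. snd (the_inv_into (cells nu) T x)) ` A"
    then obtain x where x: "x \<in> A" "y = snd (the_inv_into (cells nu) T x)" by blast
    have "the_inv_into (cells nu) T x \<in> cells nu" using tab_inv[OF T] x(1) A by blast
    then show "y \<in> {0..<nu ! 0}" using col_bound[OF p] x(2) by simp
  qed
  then have "card A \<le> card {0..<nu ! 0}" using card_inj_on_le[OF inj] by blast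
  then show False using card by simp
qed

lemma part_Cons_Suc: "part (x # xs) (Suc k) = part xs k"
  unfolding part_def by simp

lemma part_Cons_0: "part (x # xs) 0 = x"
  unfolding part_def by simp

lemma revlex_wit: "(\<forall>i<j. part mu i = part lam i) \<Longrightarrow> part mu j < part lam j \<Longrightarrow> revlex_le mu lam"
  unfolding revlex_le_def by blast

lemma not_fat_bound:
  assumes lt: "2 * t < n" and p: "is_partition (2 * n) nu" and e: "even_partition n nu"
    and nf: "\<not> fat n t nu"
  shows "nu ! 0 < 2 * (n - t)"
proof (rule ccontr)
  assume "\<not> ?thesis"
  then have ge: "2 * (n - t) \<le> nu ! 0" by simp
  define m where "m = 2 * (n - t)"
  define q where "q = replicate t (2::nat)"
  have ne: "nu \<noteq> []" using p lt unfolding is_partition_def by auto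
  then obtain x r where nu: "nu = x # r" by (cases nu) auto
  have pos: "\<forall>y\<in>set r. 0 < y" using p nu unfolding is_partition_def by simp
  have ev: "\<forall>y\<in>set r. even y" 
  proof -
    obtain lam where "nu = map (\<lambda>x. 2 * x) lam" using e unfolding even_partition_def by blast
    then show ?thesis using nu by (cases lam) auto
  qed
  have sx: "x + sum_list r = 2 * n" using p nu unfolding is_partition_def by simp
  have x0: "x = nu ! 0" using nu by simp
  have sx2: "x \<le> 2 * n" using sx by simp
  show False
  proof (cases "x = m")
    case False
    then have "part (m # q) 0 < part nu 0" using ge nu m_def False by (simp add: part_Cons_0)
    then have "fat n t nu" unfolding fat_def m_def[symmetric] q_def[symmetric]
      by (intro revlex_wit[of 0]) auto
    then show False using nf by simp
  next
    case True
    have sr: "sum_list r = 2 * t" using sx True m_def lt by simp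
    show False
    proof (cases "\<exists>i. part r i \<noteq> part q i")
      case False
      have lq: "length q = t" unfolding q_def by simp
      have "length r = length q"
      proof (rule ccontr)
        assume "length r \<noteq> length q"
        then consider "length r < length q" | "length q < length r" by linarith
        then show False
        proof cases
          case 1
          then have "part r (length r) = 0" "part q (length r) = 2" unfolding part_def q_def by auto
          then show False using False by simp
        next
          case 2
          then have "part r (length q) = r ! length q" "part q (length q) = 0"
            unfolding part_def by auto
          moreover have "r ! length q > 0" using pos 2 by simp
          ultimately show False using False by (metis less_irrefl)
        qed
      qed
      moreover have "r ! i = q ! i" if "i < length r" for i
        using False[simplified, rule_format, of i] that \<open>length r = length q\<close> unfolding part_def by simp
      ultimately have "r = q" by (simp add: nth_equalityI)
      then have "nu = m # q" using nu True by simp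
      then have "fat n t nu" unfolding fat_def m_def[symmetric] q_def[symmetric] revlex_le_def by simp
      then show False using nf by simp
    next
      case True2: True
      define j where "j = (LEAST i. part r i \<noteq> part q i)"
      have jd: "part r j \<noteq> part q j" 
      proof -
        obtain i where "part r i \<noteq> part q i" using True2 by blast
        then show ?thesis unfolding j_def by (rule LeastI[of "\<lambda>i. part r i \<noteq> part q i"])
      qed
      have jl: "\<And>i. i < j \<Longrightarrow> part r i = part q i" unfolding j_def using not_less_Least by blast
      have jlt: "part q j < part r j"
      proof (cases "j < t")
        case jt: True
        have pq: "part q j = 2" unfolding part_def q_def using jt by simp
        show ?thesis
        proof (cases "j < length r")
          case True
          then have "part r j = r ! j" unfolding part_def by simp
          moreover have "r ! j > 0" "even (r ! j)" using pos ev True by auto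
          ultimately show ?thesis using pq jd by presburger
        next
          case False
          have "\<forall>y\<in>set r. y = 2"
          proof
            fix y assume "y \<in> set r"
            then obtain i where i: "i < length r" "y = r ! i" using in_set_conv_nth[of y r] by blast
            then have "part r i = part q i" using jl False by simp
            moreover have "part q i = 2" unfolding part_def q_def using i False jt by simp
            ultimately show "y = 2" using i unfolding part_def by simp
          qed
          then have "sum_list r = 2 * length r" by (induct r) auto
          then show ?thesis using sr False jt by linarith
        qed
      next
        case False
        then have "part q j = 0" unfolding part_def q_def by simp
        then show ?thesis using jd by simp
      qed
      have "\<forall>i<Suc j. part (m # q) i = part nu i"
      proof (intro allI impI)
        fix i assume "i < Suc j"
        then show "part (m # q) i = part nu i"
          using jl nu True by (cases i) (auto simp: part_Cons_0 part_Cons_Suc)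
      qed
      moreover have "part (m # q) (Suc j) < part nu (Suc j)"
        using jlt nu by (simp add: part_Cons_Suc)
      ultimately have "fat n t nu" unfolding fat_def m_def[symmetric] q_def[symmetric]
        by (rule revlex_wit)
      then show False using nf by simp
    qed
  qed
qed

lemma perms_in_K:
  assumes "\<pi> permutes {0..<2 * (n - t)}"
  shows "\<pi> \<in> young_K n t"
proof -
  have sub: "{0..<2 * (n - t)} \<subseteq> {0..<2 * n}" by auto
  have "\<pi> (partner x) = partner (\<pi> x)" if x: "x \<in> {2*(n-t)..<2*n}" for x
  proof -
    have "partner x \<notin> {0..<2 * (n - t)}"
    proof (cases "even x")
      case False
      then have "x \<noteq> 2 * (n - t)" by auto
      then show ?thesis using x False unfolding partner_def by auto
    qed (use x in \<open>auto simp: partner_def\<close>)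
    moreover have "x \<notin> {0..<2 * (n - t)}" using x by auto
    ultimately show ?thesis using assms by (simp add: permutes_not_in)
  qed
  then show ?thesis unfolding young_K_def
    using permutes_subset[OF assms sub] permutes_image[OF assms] by blast
qed

theorem mainTheorem16:
  fixes n t :: nat and nu :: "nat list"
  assumes "2 * t < n"
    and "is_partition (2 * n) nu"
    and "even_partition n nu"
    and "\<not> fat n t nu"
  shows "\<not> trivial_occurs nu (young_K n t)"
proof
  assume "trivial_occurs nu (young_K n t)"
  then obtain v where v: "v \<in> specht nu" "v \<noteq> (\<lambda>_. 0)" "\<forall>\<sigma>\<in>young_K n t. perm_act \<sigma> v = v"
    unfolding trivial_occurs_def by blast
  obtain S c where S: "finite S" "\<forall>T\<in>S. tableau nu T"
    "v = (\<lambda>g. \<Sum>T\<in>S. c T * polytabloid nu T g)" using v(1) unfolding specht_def by blast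
  define m where "m = 2 * (n - t)"
  define A where "A = {0..<m}"
  define P where "P = {\<pi>. \<pi> permutes A}"
  have sl: "sum_list nu = 2 * n" using assms(2) unfolding is_partition_def by simp
  have AN: "A \<subseteq> {0..<sum_list nu}" unfolding A_def m_def sl by auto
  have bound: "nu ! 0 < card A" unfolding A_def m_def
    using not_fat_bound[OF assms(1-4)] by simp
  have van: "(\<Sum>\<pi>\<in>P. polytabloid nu T (h \<circ> \<pi>)) = 0" if T: "T \<in> S" for T h
  proof -
    have Tt: "tableau nu T" using S(2) T by blast
    obtain a b where ab: "a \<in> A" "b \<in> A" "a \<noteq> b"
      "snd (the_inv_into (cells nu) T a) = snd (the_inv_into (cells nu) T b)"
      using pigeon[OF assms(2) Tt AN bound] by blast
    show ?thesis unfolding P_def using vanish[OF Tt AN ab] .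
  qed
  have finP: "finite P" unfolding P_def A_def using finite_permutations by blast
  have cardP: "card P = fact m" unfolding P_def A_def using card_permutations[of "{0..<m}" m] by simp
  have "v h = 0" for h
  proof -
    have fix1: "v (h \<circ> \<pi>) = v h" if "\<pi> \<in> P" for \<pi>
    proof -
      have "\<pi> \<in> young_K n t" using that perms_in_K unfolding P_def A_def m_def by blast
      then have "perm_act \<pi> v = v" using v(3) by blast
      then show ?thesis unfolding perm_act_def by metis
    qed
    have "of_nat (card P) * v h = (\<Sum>\<pi>\<in>P. v (h \<circ> \<pi>))" using fix1 by simp
    also have "\<dots> = (\<Sum>\<pi>\<in>P. \<Sum>T\<in>S. c T * polytabloid nu T (h \<circ> \<pi>))" using S(3) by simp
    also have "\<dots> = (\<Sum>T\<in>S. c T * (\<Sum>\<pi>\<in>P. polytabloid nu T (h \<circ> \<pi>)))"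
      by (subst sum.swap) (simp add: sum_distrib_left)
    also have "\<dots> = 0" using van by simp
    finally show ?thesis using cardP by simp
  qed
  then show False using v(2) by auto
qed

end
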